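(* Let $p$ be a prime and $a,b$ positive integers with $b>1$, and suppose $k=\frac{p^{ab}-1}{b(p^a-1)}$ is an integer and $u=b(p^a-1)$ is a primitive divisor of $p^{ab}-1$. Let $\omega$ be a primitive element of $\mathbb{F}_{p^{ab}}$; for $\alpha\in\mathbb{F}_{p^{ab}}$ write $\alpha=\sum_{i=0}^{b-1}c_i\omega^{ik}$ with $c_i\in\mathbb{F}_{p^a}$ and set $[\alpha]_i=c_{i-1}$ for $i=1,\ldots,b$. For an integer $r\ge1$ let $N_r$ be the number of $(x_1,\ldots,x_r)\in(\mathbb{F}_{p^{ab}}^* )^r$ with $x_1^k+\cdots+x_r^k=\alpha$. Then $$N_r=k^{r}\sum_{\substack{r_1+\cdots+r_b=r\\ r_i\ge0}} \frac{r!}{r_{1}!\cdots r_{b}!}\prod_{i=1}^b a_{i}(\alpha),$$ where $$a_{i}(\alpha)=\begin{cases}\frac{p^{a}-1}{p^{a}}\big((p^{a}-1)^{r_i-1}-(-1)^{r_i-1}\big) & \text{if } [\alpha]_i=0,\\[1mm] \frac{1}{p^{a}}\big((p^{a}-1)^{r_i}-(-1)^{r_i}\big) & \text{if } [\alpha]_i\neq 0.\end{cases}$$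
   Context: A divisor $u$ of $p^m-1$ is primitive if $u\nmid p^h-1$ for all $1\le h<m$. Under the hypotheses, $\{1,\omega^k,\ldots,\omega^{(b-1)k}\}$ is a basis of $\mathbb{F}_{p^{ab}}$ over $\mathbb{F}_{p^a}$, so the coordinates $[\alpha]_i$ are well defined. *)

theory Defs
  imports Complex_Main "HOL-Computational_Algebra.Primes" "HOL-Library.Cardinality"
begin

definition primitive_divisor :: "nat \<Rightarrow> nat \<Rightarrow> nat \<Rightarrow> bool" where
  "primitive_divisor u p m \<longleftrightarrow> u dvd p ^ m - 1 \<and> (\<forall>h. 1 \<le> h \<and> h < m \<longrightarrow> \<not> u dvd p ^ h - 1)"

definition primitive_element :: "'a::{finite,field} \<Rightarrow> bool" where
  "primitive_element \<omega> \<longleftrightarrow> \<omega> \<noteq> 0 \<and> (\<forall>x. x \<noteq> 0 \<longrightarrow> (\<exists>n::nat. \<omega> ^ n = x))"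

definition subfield_of_order :: "nat \<Rightarrow> 'a::{finite,field} set" where
  "subfield_of_order q = {x. x ^ q = x}"

definition num_solutions :: "nat \<Rightarrow> nat \<Rightarrow> 'a::{finite,field} \<Rightarrow> nat" where
  "num_solutions r k \<alpha> = card {xs. length xs = r \<and> (\<forall>x\<in>set xs. x \<noteq> 0) \<and>
      sum_list (map (\<lambda>x. x ^ k) xs) = \<alpha>}"

definition a_factor :: "nat \<Rightarrow> nat \<Rightarrow> bool \<Rightarrow> real" where
  "a_factor q ri coord_zero =
     (if coord_zero
      then (real q - 1) / real q * ((real q - 1) powi (int ri - 1) - (-1) powi (int ri - 1))
      else 1 / real q * ((real q - 1) ^ ri - (-1) ^ ri))"

definition compositions :: "nat \<Rightarrow> nat \<Rightarrow> (nat \<Rightarrow> nat) set" where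
  "compositions b r = {rs. (\<forall>i. i \<notin> {1..b} \<longrightarrow> rs i = 0) \<and> (\<Sum>i=1..b. rs i) = r}"

end

theory Submission
  imports Defs "HOL-Number_Theory.Residues" "HOL-Computational_Algebra.Polynomial"
begin

lemma lists_rec_card:
  fixes f :: "'a \<Rightarrow> 'b::ab_group_add"
  assumes fin: "finite A"
  shows "card {xs. length xs = Suc n \<and> set xs \<subseteq> A \<and> sum_list (map f xs) = s} =
    (\<Sum>x\<in>A. card {xs. length xs = n \<and> set xs \<subseteq> A \<and> sum_list (map f xs) = s - f x})"
proof -
  let ?S = "\<lambda>x. {xs. length xs = n \<and> set xs \<subseteq> A \<and> sum_list (map f xs) = s - f x}"
  have eq: "{xs. length xs = Suc n \<and> set xs \<subseteq> A \<and> sum_list (map f xs) = s} =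
     (\<Union>x\<in>A. (\<lambda>xs. x # xs) ` ?S x)"
  proof (intro equalityI subsetI)
    fix ys assume "ys \<in> {xs. length xs = Suc n \<and> set xs \<subseteq> A \<and> sum_list (map f xs) = s}"
    then obtain x xs where "ys = x # xs" "length xs = n" "x \<in> A" "set xs \<subseteq> A"
       "f x + sum_list (map f xs) = s" by (cases ys) auto
    then show "ys \<in> (\<Union>x\<in>A. (\<lambda>xs. x # xs) ` ?S x)"
      by (auto simp: algebra_simps intro!: bexI[of _ x] image_eqI[of _ _ xs])
  qed auto
  have fS: "finite (?S x)" for x
    by (rule finite_subset[OF _ finite_lists_length_eq[OF fin, of n]]) auto
  show ?thesis
    unfolding eq
    by (subst card_UN_disjoint) (auto simp: fin fS card_image)
qed

lemma lists_zero_card: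
  "card {xs. length xs = 0 \<and> set xs \<subseteq> A \<and> sum_list (map f xs) = s} = (if s = 0 then 1 else 0)"
proof -
  have "{xs. length xs = 0 \<and> set xs \<subseteq> A \<and> sum_list (map f xs) = s} = (if s = 0 then {[]} else {})"
    by auto
  then show ?thesis by simp
qed


lemma compositions_finite: "finite (compositions b r)"
proof -
  have "finite ((\<lambda>rs. restrict rs {1..b}) ` compositions b r)"
  proof (rule finite_subset[OF _ finite_PiE[of "{1..b}" "\<lambda>_. {..r}"]])
    show "(\<lambda>rs. restrict rs {1..b}) ` compositions b r \<subseteq> PiE {1..b} (\<lambda>_. {..r})"
    proof
      fix g assume "g \<in> (\<lambda>rs. restrict rs {1..b}) ` compositions b r"
      then obtain rs where g: "g = restrict rs {1..b}" and rs: "rs \<in> compositions b r" by blast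
      have "rs i \<le> r" if "i \<in> {1..b}" for i
        using rs member_le_sum[of i "{1..b}" rs] that by (auto simp: compositions_def)
      then show "g \<in> PiE {1..b} (\<lambda>_. {..r})" by (auto simp: g)
    qed
  qed auto
  moreover have "inj_on (\<lambda>rs. restrict rs {1..b}) (compositions b r)"
  proof
    fix x y assume "x \<in> compositions b r" "y \<in> compositions b r"
      "restrict x {1..b} = restrict y {1..b}"
    show "x = y"
    proof (rule ext)
      fix j show "x j = y j"
      proof (cases "j \<in> {1..b}")
        case True then show ?thesis using fun_cong[OF \<open>restrict x {1..b} = restrict y {1..b}\<close>, of j] by simp
      next
        case False then show ?thesis using \<open>x \<in> compositions b r\<close> \<open>y \<in> compositions b r\<close>
          unfolding compositions_def by auto
      qed
    qed
  qed
  ultimately show ?thesis using finite_imageD by blast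
qed

lemma compositions_zero: "compositions b 0 = {\<lambda>_. 0}"
  unfolding compositions_def by (auto simp: fun_eq_iff) (metis atLeastAtMost_iff)

definition mult_coeff :: "nat \<Rightarrow> nat \<Rightarrow> (nat \<Rightarrow> nat) \<Rightarrow> real" where
  "mult_coeff b r rs = real (fact r) / (\<Prod>i=1..b. real (fact (rs i)))"

lemma prod_upd:
  fixes h :: "nat \<Rightarrow> 'b::comm_monoid_mult"
  assumes "i \<in> A" "finite A"
  shows "(\<Prod>j\<in>A. h ((rs(i := v)) j)) = h v * (\<Prod>j\<in>A-{i}. h (rs j))"
  using assms by (subst prod.remove[of A i]) (auto intro!: prod.cong)

lemma sum_upd:
  fixes rs :: "nat \<Rightarrow> 'b::comm_monoid_add"
  assumes "i \<in> A" "finite A"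
  shows "(\<Sum>j\<in>A. (rs(i := v)) j) = v + (\<Sum>j\<in>A-{i}. rs j)"
  using assms by (subst sum.remove[of A i]) (auto intro!: sum.cong)

lemma multinomial_step:
  fixes F :: "(nat \<Rightarrow> nat) \<Rightarrow> real"
  shows "(\<Sum>i=1..b. \<Sum>rs\<in>compositions b r. mult_coeff b r rs * F (rs(i := Suc (rs i)))) =
         (\<Sum>rs\<in>compositions b (Suc r). mult_coeff b (Suc r) rs * F rs)"
proof -
  have "(\<Sum>rs\<in>compositions b (Suc r). mult_coeff b (Suc r) rs * F rs) =
     (\<Sum>rs\<in>compositions b (Suc r). \<Sum>i=1..b. real (rs i) * (real (fact r) / (\<Prod>j=1..b. real (fact (rs j)))) * F rs)"
  proof (rule sum.cong[OF refl])
    fix rs assume rs: "rs \<in> compositions b (Suc r)"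
    then have "(\<Sum>i=1..b. real (rs i)) = real (Suc r)"
      unfolding compositions_def by (simp flip: of_nat_sum)
    moreover have "(\<Sum>i=1..b. real (rs i) * (real (fact r) / (\<Prod>j=1..b. real (fact (rs j)))) * F rs)
       = (\<Sum>i=1..b. real (rs i)) * (real (fact r) / (\<Prod>j=1..b. real (fact (rs j)))) * F rs"
      by (simp only: sum_distrib_right)
    ultimately show "mult_coeff b (Suc r) rs * F rs = (\<Sum>i=1..b. real (rs i) * (real (fact r) / (\<Prod>j=1..b. real (fact (rs j)))) * F rs)"
      unfolding mult_coeff_def by (simp only: of_nat_fact fact_Suc of_nat_mult times_divide_eq_right of_nat_id id_def)
  qed
  also have "\<dots> = (\<Sum>i=1..b. \<Sum>rs\<in>compositions b (Suc r). real (rs i) * (real (fact r) / (\<Prod>j=1..b. real (fact (rs j)))) * F rs)"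
    by (rule sum.swap)
  also have "\<dots> = (\<Sum>i=1..b. \<Sum>rs\<in>compositions b r. mult_coeff b r rs * F (rs(i := Suc (rs i))))"
  proof (rule sum.cong[OF refl])
    fix i assume i: "i \<in> {1..b}"
    let ?g = "\<lambda>rs. rs(i := Suc (rs i))"
    have img: "?g ` compositions b r = {rs \<in> compositions b (Suc r). rs i > 0}"
    proof (intro equalityI subsetI)
      fix rs' assume "rs' \<in> ?g ` compositions b r"
      then obtain rs where rs': "rs' = ?g rs" and rs: "rs \<in> compositions b r" by blast
      have "(\<Sum>j=1..b. rs' j) = Suc (rs i) + (\<Sum>j\<in>{1..b}-{i}. rs j)"
        unfolding rs' using i by (subst sum_upd) auto
      also have "\<dots> = Suc r"
        using rs i sum.remove[of "{1..b}" i rs] unfolding compositions_def by simp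
      finally have "(\<Sum>j=1..b. rs' j) = Suc r" .
      then show "rs' \<in> {rs \<in> compositions b (Suc r). rs i > 0}"
        using rs i unfolding rs' compositions_def by auto
    next
      fix rs' assume rs': "rs' \<in> {rs \<in> compositions b (Suc r). rs i > 0}"
      define rs where "rs = rs'(i := rs' i - 1)"
      have "?g rs = rs'" using rs' by (auto simp: rs_def fun_eq_iff)
      moreover have "rs \<in> compositions b r"
      proof -
        have "(\<Sum>j=1..b. rs j) = rs' i - 1 + (\<Sum>j\<in>{1..b}-{i}. rs' j)"
          unfolding rs_def using i by (subst sum_upd) auto
        also have "\<dots> = r"
          using rs' i sum.remove[of "{1..b}" i rs'] unfolding compositions_def
          by simp
        finally show ?thesis using rs' i unfolding compositions_def rs_def by auto
      qed
      ultimately show "rs' \<in> ?g ` compositions b r" by blast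
    qed
    have inj: "inj_on ?g (compositions b r)"
    proof
      fix x y assume "?g x = ?g y"
      then have "x j = y j" for j
        by (cases "j = i") (auto simp: fun_eq_iff dest: spec[of _ j] spec[of _ i])
      then show "x = y" by auto
    qed
    have "(\<Sum>rs\<in>compositions b (Suc r). real (rs i) * (real (fact r) / (\<Prod>j=1..b. real (fact (rs j)))) * F rs)
       = (\<Sum>rs\<in>{rs \<in> compositions b (Suc r). rs i > 0}. real (rs i) * (real (fact r) / (\<Prod>j=1..b. real (fact (rs j)))) * F rs)"
      by (rule sum.mono_neutral_right) (auto simp: compositions_finite)
    also have "\<dots> = (\<Sum>rs\<in>compositions b r. real (?g rs i) * (real (fact r) / (\<Prod>j=1..b. real (fact (?g rs j)))) * F (?g rs))"
      unfolding img[symmetric] by (subst sum.reindex[OF inj]) simp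
    also have "\<dots> = (\<Sum>rs\<in>compositions b r. mult_coeff b r rs * F (?g rs))"
    proof (rule sum.cong[OF refl])
      fix rs
      have P1: "(\<Prod>j=1..b. real (fact (?g rs j))) = real (fact (Suc (rs i))) * (\<Prod>j\<in>{1..b}-{i}. real (fact (rs j)))"
        using i by (subst prod_upd) auto
      have P2: "(\<Prod>j=1..b. real (fact (rs j))) = real (fact (rs i)) * (\<Prod>j\<in>{1..b}-{i}. real (fact (rs j)))"
        using i by (subst prod.remove[of _ i]) auto
      have nz: "(\<Prod>j\<in>{1..b}-{i}. real (fact (rs j))) \<noteq> 0" by (simp add: prod_zero_iff)
      show "real (?g rs i) * (real (fact r) / (\<Prod>j=1..b. real (fact (?g rs j)))) * F (?g rs) =
            mult_coeff b r rs * F (?g rs)"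
      proof -
        have A: "real (Suc (rs i)) \<noteq> 0" by simp
        have "real (fact (Suc (rs i))) = real (Suc (rs i)) * real (fact (rs i))"
          by (simp only: fact_Suc of_nat_mult of_nat_id id_def)
        then have "real (?g rs i) * (real (fact r) / (\<Prod>j=1..b. real (fact (?g rs j)))) =
           real (fact r) / (\<Prod>j=1..b. real (fact (rs j)))"
          unfolding P1 P2 using A by simp
        then show ?thesis unfolding mult_coeff_def by simp
      qed
    qed
    finally show "(\<Sum>rs\<in>compositions b (Suc r). real (rs i) * (real (fact r) / (\<Prod>j=1..b. real (fact (rs j)))) * F rs)
       = (\<Sum>rs\<in>compositions b r. mult_coeff b r rs * F (?g rs))" .
  qed
  finally show ?thesis by simp
qed


definition NK :: "'a::ab_group_add set \<Rightarrow> nat \<Rightarrow> 'a \<Rightarrow> nat" where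
  "NK K n c = card {ts. length ts = n \<and> set ts \<subseteq> K - {0} \<and> sum_list ts = c}"

lemma NK_0: "NK K 0 c = (if c = 0 then 1 else 0)"
  unfolding NK_def using lists_zero_card[of "K - {0}" "\<lambda>x. x" c] by simp

lemma NK_Suc: "finite K \<Longrightarrow> NK K (Suc n) c = (\<Sum>t\<in>K-{0}. NK K n (c - t))"
  unfolding NK_def using lists_rec_card[where f="\<lambda>x. x" and A="K - {0}" and n=n and s=c] by simp

lemma af_true_Suc: "a_factor q (Suc m) True = (real q - 1) / real q * ((real q - 1) ^ m - (-1) ^ m)"
  unfolding a_factor_def by (simp add: power_int_of_nat)

lemma af_true_0: "q \<ge> 2 \<Longrightarrow> a_factor q 0 True = 1"
proof -
  assume q: "q \<ge> 2"
  then have ne: "real q - 1 \<noteq> 0" "real q \<noteq> 0" by auto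
  have "a_factor q 0 True = (real q - 1) / real q * (inverse (real q - 1) + 1)"
    unfolding a_factor_def by simp
  also have "\<dots> = ((real q - 1) * inverse (real q - 1) + (real q - 1)) / real q"
    by (simp add: field_simps)
  also have "\<dots> = 1" using ne by simp
  finally show ?thesis .
qed

lemma af_false: "a_factor q n False = 1 / real q * ((real q - 1) ^ n - (-1) ^ n)"
  unfolding a_factor_def by simp

lemma af_id1: "(real q - 1) * a_factor q n False = a_factor q (Suc n) True"
  unfolding af_false af_true_Suc by simp

lemma af_id2: assumes "q \<ge> 2"
  shows "a_factor q n True + (real q - 2) * a_factor q n False = a_factor q (Suc n) False"
proof (cases n)
  case 0
  then show ?thesis using assms by (simp add: af_true_0 af_false)
next
  case (Suc m)
  have q: "real q \<noteq> 0" using assms by simp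
  define y where "y = (real q - 1) ^ m"
  define s where "s = ((-1::real) ^ m)"
  have "a_factor q n True + (real q - 2) * a_factor q n False =
     ((real q - 1) * (y - s) + (real q - 2) * ((real q - 1) * y + s)) / real q"
    unfolding Suc af_true_Suc af_false y_def s_def using q by (simp add: field_simps)
  also have "\<dots> = ((real q - 1) * ((real q - 1) * y) - s) / real q"
    by (simp add: algebra_simps)
  also have "\<dots> = a_factor q (Suc n) False"
    unfolding Suc af_false y_def s_def by (simp add: field_simps)
  finally show ?thesis .
qed

lemma NK_formula:
  fixes K :: "'a::ab_group_add set"
  assumes fin: "finite K" and K0: "0 \<in> K" and Kminus: "\<And>x y. x \<in> K \<Longrightarrow> y \<in> K \<Longrightarrow> x - y \<in> K"
    and q: "card K \<ge> 2"
  shows "c \<in> K \<Longrightarrow> real (NK K n c) = a_factor (card K) n (c = 0)"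
proof (induction n arbitrary: c)
  case 0
  then show ?case using q by (cases "c = 0") (simp_all add: NK_0 af_true_0 af_false)
next
  case (Suc n)
  have cardK: "card (K - {0}) = card K - 1" using K0 fin by simp
  have "real (NK K (Suc n) c) = (\<Sum>t\<in>K-{0}. real (NK K n (c - t)))"
    using NK_Suc[OF fin] by simp
  also have "\<dots> = (\<Sum>t\<in>K-{0}. a_factor (card K) n (c - t = 0))"
    using Suc Kminus by (intro sum.cong) auto
  also have "\<dots> = a_factor (card K) (Suc n) (c = 0)"
  proof (cases "c = 0")
    case True
    then have "(\<Sum>t\<in>K-{0}. a_factor (card K) n (c - t = 0)) = (\<Sum>t\<in>K-{0}. a_factor (card K) n False)"
      by (intro sum.cong) auto
    also have "\<dots> = (real (card K) - 1) * a_factor (card K) n False"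
      using cardK q by (simp add: of_nat_diff)
    finally show ?thesis using True af_id1 by simp
  next
    case False
    have cK: "c \<in> K - {0}" using False Suc.prems by simp
    have "(\<Sum>t\<in>K-{0}. a_factor (card K) n (c - t = 0)) =
       a_factor (card K) n True + (\<Sum>t\<in>K-{0}-{c}. a_factor (card K) n (c - t = 0))"
      using fin cK by (subst sum.remove[of _ c]) auto
    also have "(\<Sum>t\<in>K-{0}-{c}. a_factor (card K) n (c - t = 0)) = (\<Sum>t\<in>K-{0}-{c}. a_factor (card K) n False)"
      by (intro sum.cong) auto
    also have "\<dots> = (real (card K) - 2) * a_factor (card K) n False"
      using cardK q cK fin by (simp add: of_nat_diff)
    finally show ?thesis using False af_id2[OF q] by simp
  qed
  finally show ?case .
qed


definition TD :: "'a::ab_group_add set \<Rightarrow> nat \<Rightarrow> 'a \<Rightarrow> nat" where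
  "TD D r s = card {ys. length ys = r \<and> set ys \<subseteq> D \<and> sum_list ys = s}"

lemma TD_0: "TD D 0 c = (if c = 0 then 1 else 0)"
  unfolding TD_def using lists_zero_card[of D "\<lambda>x. x" c] by simp

lemma TD_Suc: "finite D \<Longrightarrow> TD D (Suc n) c = (\<Sum>t\<in>D. TD D n (c - t))"
  unfolding TD_def using lists_rec_card[where f="\<lambda>x. x" and A="D" and n=n and s=c] by simp

lemma sum_delta_upd:
  fixes e v :: "nat \<Rightarrow> 'a::field"
  assumes "i \<in> {1..b}"
  shows "(\<Sum>j=1..b. (if j = i then e j - t else e j) * v j) = (\<Sum>j=1..b. e j * v j) - t * v i"
proof -
  have "(\<Sum>j=1..b. (if j = i then e j - t else e j) * v j) = (\<Sum>j=1..b. e j * v j - (if j = i then t * v j else 0))"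
    by (intro sum.cong) (auto simp: algebra_simps)
  also have "\<dots> = (\<Sum>j=1..b. e j * v j) - t * v i"
    using assms by (simp add: sum_subtractf)
  finally show ?thesis .
qed

lemma D_count:
  fixes K :: "'a::field set" and v :: "nat \<Rightarrow> 'a"
  assumes fin: "finite K" and K0: "0 \<in> K" and Kminus: "\<And>x y. x \<in> K \<Longrightarrow> y \<in> K \<Longrightarrow> x - y \<in> K"
    and indep: "\<And>d. (\<forall>i\<in>{1..b}. d i \<in> K) \<Longrightarrow> (\<Sum>i=1..b. d i * v i) = 0 \<Longrightarrow> \<forall>i\<in>{1..b}. d i = 0"
    and Ddef: "D = (\<lambda>(t,i). t * v i) ` ((K-{0}) \<times> {1..b})"
  shows "\<forall>i\<in>{1..b}. e i \<in> K \<Longrightarrow> real (TD D r (\<Sum>i=1..b. e i * v i)) =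
     (\<Sum>rs\<in>compositions b r. mult_coeff b r rs * (\<Prod>i=1..b. real (NK K (rs i) (e i))))"
proof (induction r arbitrary: e)
  case 0
  have "(\<Sum>i=1..b. e i * v i) = 0 \<longleftrightarrow> (\<forall>i\<in>{1..b}. e i = 0)"
    using indep[of e] 0 by auto
  then show ?case
    by (simp add: TD_0 NK_0 compositions_zero mult_coeff_def prod.neutral)
next
  case (Suc r)
  have finD: "finite D" using Ddef fin by simp
  have inj0: "t = t' \<and> i = i'" if t: "t \<in> K" "t \<noteq> 0" and i: "i \<in> {1..b}" and t': "t' \<in> K" "t' \<noteq> 0"
      and i': "i' \<in> {1..b}" and eq: "t * v i = t' * v i'" for t i t' i'

    proof (cases "i = i'")
      case True
      define d where "d = (\<lambda>j. if j = i then t - t' else 0)"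
      have "(\<Sum>j=1..b. d j * v j) = (\<Sum>j=1..b. if j = i then (t - t') * v j else 0)"
        unfolding d_def by (intro sum.cong) auto
      also have "\<dots> = 0" using i eq True by (simp add: algebra_simps)
      finally have S: "(\<Sum>j=1..b. d j * v j) = 0" .
      have "\<forall>j\<in>{1..b}. d j \<in> K" using t t' K0 Kminus by (auto simp: d_def)
      then have "d i = 0" using indep[of d] S i by blast
      then show ?thesis using True by (simp add: d_def)
    next
      case False
      define d where "d = (\<lambda>j. if j = i then t else if j = i' then 0 - t' else 0)"
      have "(\<Sum>j=1..b. d j * v j) = (\<Sum>j=1..b. (if j = i then t * v j else 0) - (if j = i' then t' * v j else 0))"
        unfolding d_def using False by (intro sum.cong) auto
      also have "\<dots> = 0" using i i' eq by (simp add: sum_subtractf)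
      finally have S: "(\<Sum>j=1..b. d j * v j) = 0" .
      have "0 - t' \<in> K" using t' K0 Kminus by blast
      then have "\<forall>j\<in>{1..b}. d j \<in> K" using t K0 unfolding d_def by auto
      then have "d i = 0" using indep[of d] S i by blast
      then show ?thesis using t by (simp add: d_def)
    qed
  have inj: "inj_on (\<lambda>(t,i). t * v i) ((K-{0}) \<times> {1..b})"
  proof (rule inj_onI)
    fix x y assume x: "x \<in> (K-{0}) \<times> {1..b}" and y: "y \<in> (K-{0}) \<times> {1..b}"
      and eq: "(\<lambda>(t,i). t * v i) x = (\<lambda>(t,i). t * v i) y"
    obtain t i where xe: "x = (t, i)" by (cases x)
    obtain t' i' where ye: "y = (t', i')" by (cases y)
    show "x = y" using inj0[of t i t' i'] x y eq unfolding xe ye by simp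
  qed
  define F where "F = (\<lambda>rs. \<Prod>j=1..b. real (NK K (rs j) (e j)))"
  have "real (TD D (Suc r) (\<Sum>i=1..b. e i * v i)) = (\<Sum>y\<in>D. real (TD D r ((\<Sum>i=1..b. e i * v i) - y)))"
    using TD_Suc[OF finD] by simp
  also have "\<dots> = (\<Sum>(t,i)\<in>(K-{0}) \<times> {1..b}. real (TD D r ((\<Sum>i=1..b. e i * v i) - t * v i)))"
    unfolding Ddef by (subst sum.reindex[OF inj]) (simp add: case_prod_beta)
  also have "\<dots> = (\<Sum>t\<in>K-{0}. \<Sum>i=1..b. real (TD D r ((\<Sum>i=1..b. e i * v i) - t * v i)))"
    by (rule sum.cartesian_product[symmetric])
  also have "\<dots> = (\<Sum>i=1..b. \<Sum>t\<in>K-{0}. real (TD D r ((\<Sum>i=1..b. e i * v i) - t * v i)))"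
    by (rule sum.swap)
  also have "\<dots> = (\<Sum>i=1..b. \<Sum>rs\<in>compositions b r. mult_coeff b r rs * F (rs(i := Suc (rs i))))"
  proof (rule sum.cong[OF refl])
    fix i assume i: "i \<in> {1..b}"
    have "(\<Sum>t\<in>K-{0}. real (TD D r ((\<Sum>i=1..b. e i * v i) - t * v i))) =
       (\<Sum>t\<in>K-{0}. \<Sum>rs\<in>compositions b r. mult_coeff b r rs *
           (real (NK K (rs i) (e i - t)) * (\<Prod>j\<in>{1..b}-{i}. real (NK K (rs j) (e j)))))"
    proof (rule sum.cong[OF refl])
      fix t assume t: "t \<in> K - {0}"
      define e' where "e' = (\<lambda>j. if j = i then e j - t else e j)"
      have e'K: "\<forall>j\<in>{1..b}. e' j \<in> K" using Suc.prems t Kminus by (auto simp: e'_def)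
      have "(\<Sum>i=1..b. e i * v i) - t * v i = (\<Sum>j=1..b. e' j * v j)"
        unfolding e'_def using sum_delta_upd[OF i, of e t v] by simp
      then have "real (TD D r ((\<Sum>i=1..b. e i * v i) - t * v i)) =
          (\<Sum>rs\<in>compositions b r. mult_coeff b r rs * (\<Prod>j=1..b. real (NK K (rs j) (e' j))))"
        using Suc.IH[OF e'K] by simp
      also have "\<dots> = (\<Sum>rs\<in>compositions b r. mult_coeff b r rs *
           (real (NK K (rs i) (e i - t)) * (\<Prod>j\<in>{1..b}-{i}. real (NK K (rs j) (e j)))))"
      proof (rule sum.cong[OF refl])
        fix rs
        have "(\<Prod>j=1..b. real (NK K (rs j) (e' j))) = real (NK K (rs i) (e' i)) * (\<Prod>j\<in>{1..b}-{i}. real (NK K (rs j) (e' j)))"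
          using i by (subst prod.remove[of _ i]) auto
        also have "(\<Prod>j\<in>{1..b}-{i}. real (NK K (rs j) (e' j))) = (\<Prod>j\<in>{1..b}-{i}. real (NK K (rs j) (e j)))"
          by (intro prod.cong) (auto simp: e'_def)
        finally show "mult_coeff b r rs * (\<Prod>j=1..b. real (NK K (rs j) (e' j))) = mult_coeff b r rs *
           (real (NK K (rs i) (e i - t)) * (\<Prod>j\<in>{1..b}-{i}. real (NK K (rs j) (e j))))"
          by (simp add: e'_def)
      qed
      finally show "real (TD D r ((\<Sum>i=1..b. e i * v i) - t * v i)) = (\<Sum>rs\<in>compositions b r. mult_coeff b r rs *
           (real (NK K (rs i) (e i - t)) * (\<Prod>j\<in>{1..b}-{i}. real (NK K (rs j) (e j)))))" .
    qed
    also have "\<dots> = (\<Sum>rs\<in>compositions b r. \<Sum>t\<in>K-{0}. mult_coeff b r rs *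
           (real (NK K (rs i) (e i - t)) * (\<Prod>j\<in>{1..b}-{i}. real (NK K (rs j) (e j)))))"
      by (rule sum.swap)
    also have "\<dots> = (\<Sum>rs\<in>compositions b r. mult_coeff b r rs * F (rs(i := Suc (rs i))))"
    proof (rule sum.cong[OF refl])
      fix rs
      have "(\<Sum>t\<in>K-{0}. mult_coeff b r rs *
           (real (NK K (rs i) (e i - t)) * (\<Prod>j\<in>{1..b}-{i}. real (NK K (rs j) (e j))))) =
         mult_coeff b r rs * ((\<Sum>t\<in>K-{0}. real (NK K (rs i) (e i - t))) * (\<Prod>j\<in>{1..b}-{i}. real (NK K (rs j) (e j))))"
        by (simp add: sum_distrib_left sum_distrib_right mult.assoc)
      also have "(\<Sum>t\<in>K-{0}. real (NK K (rs i) (e i - t))) = real (NK K (Suc (rs i)) (e i))"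
        using NK_Suc[OF fin] by simp
      also have "real (NK K (Suc (rs i)) (e i)) * (\<Prod>j\<in>{1..b}-{i}. real (NK K (rs j) (e j))) = F (rs(i := Suc (rs i)))"
        unfolding F_def using i by (subst prod.remove[of "{1..b}" i]) (auto intro!: prod.cong)
      finally show "(\<Sum>t\<in>K-{0}. mult_coeff b r rs *
           (real (NK K (rs i) (e i - t)) * (\<Prod>j\<in>{1..b}-{i}. real (NK K (rs j) (e j))))) =
          mult_coeff b r rs * F (rs(i := Suc (rs i)))" .
    qed
    finally show "(\<Sum>t\<in>K-{0}. real (TD D r ((\<Sum>i=1..b. e i * v i) - t * v i))) =
       (\<Sum>rs\<in>compositions b r. mult_coeff b r rs * F (rs(i := Suc (rs i))))" .
  qed
  also have "\<dots> = (\<Sum>rs\<in>compositions b (Suc r). mult_coeff b (Suc r) rs * F rs)"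
    by (rule multinomial_step)
  finally show ?case unfolding F_def .
qed


lemma ff_power_card:
  fixes x :: "'a::{finite,field}"
  shows "x ^ CARD('a) = x"
proof (cases "x = 0")
  case False
  have "x * (\<Prod>y\<in>UNIV-{0}. x * y) = x * x ^ (CARD('a) - 1) * \<Prod>(UNIV-{0})"
    by (simp add: prod.distrib mult_ac)
  also have "x * x ^ (CARD('a) - 1) = x ^ Suc (CARD('a) - 1)"
    by (subst power_Suc) auto
  also have "Suc (CARD('a) - 1) = CARD('a)"
    using finite_UNIV_card_ge_0[where ?'a = 'a] by simp
  also have "(\<Prod>y\<in>UNIV-{0}. x * y) = (\<Prod>y\<in>UNIV-{0}. y)"
    by (rule prod.reindex_bij_witness[of _ "\<lambda>y. y / x" "\<lambda>y. x * y"]) (use False in auto)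
  finally show ?thesis
    by simp
qed (use finite_UNIV_card_ge_0[where ?'a = 'a] in auto)

lemma ff_fermat:
  fixes x :: "'a::{finite,field}"
  assumes "x \<noteq> 0" shows "x ^ (CARD('a) - 1) = 1"
proof -
  have "x * x ^ (CARD('a) - 1) = x * 1"
  proof -
    have c: "CARD('a) = Suc (CARD('a) - 1)" using finite_UNIV_card_ge_0[where ?'a = 'a] by simp
    have "x * x ^ (CARD('a) - 1) = x ^ CARD('a)" by (subst (2) c) (simp only: power_Suc)
    then show ?thesis using ff_power_card[of x] by simp
  qed
  then show ?thesis using assms by simp
qed

lemma card_nonzero: "card (UNIV - {0::'a::{finite,field}}) = CARD('a) - 1"
  by (simp add: card_Diff_singleton)

lemma card_ge2: "CARD('a::{finite,field}) \<ge> 2"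
proof -
  have "{0, 1::'a} \<subseteq> UNIV" by simp
  then have "card {0, 1::'a} \<le> CARD('a)" by (intro card_mono) simp_all
  then show ?thesis by simp
qed

lemma prim_pow_mod:
  fixes \<omega> :: "'a::{finite,field}"
  assumes "primitive_element \<omega>"
  shows "\<omega> ^ n = \<omega> ^ (n mod (CARD('a) - 1))"
proof -
  have e: "n = (CARD('a) - 1) * (n div (CARD('a) - 1)) + n mod (CARD('a) - 1)" by simp
  have "\<omega> ^ n = (\<omega> ^ (CARD('a) - 1)) ^ (n div (CARD('a) - 1)) * \<omega> ^ (n mod (CARD('a) - 1))"
    by (subst e) (simp only: power_add power_mult)
  moreover have "\<omega> ^ (CARD('a) - 1) = 1" using ff_fermat[of \<omega>] assms unfolding primitive_element_def by simp
  ultimately show ?thesis by simp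
qed

lemma prim_pow_one:
  fixes \<omega> :: "'a::{finite,field}"
  assumes pe: "primitive_element \<omega>"
  shows "\<omega> ^ n = 1 \<longleftrightarrow> (CARD('a) - 1) dvd n"
proof
  assume "(CARD('a) - 1) dvd n"
  then show "\<omega> ^ n = 1" using prim_pow_mod[OF pe, of n] by simp
next
  assume one: "\<omega> ^ n = 1"
  define m where "m = n mod (CARD('a) - 1)"
  have m1: "\<omega> ^ m = 1" using one prim_pow_mod[OF pe, of n] by (simp add: m_def)
  have mlt: "m < CARD('a) - 1" using card_ge2[where 'a='a] by (simp add: m_def)
  show "(CARD('a) - 1) dvd n"
  proof (rule ccontr)
    assume "\<not> (CARD('a) - 1) dvd n"
    then have mpos: "m > 0" by (auto simp: m_def dvd_eq_mod_eq_0)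
    have "UNIV - {0} \<subseteq> (\<lambda>j. \<omega> ^ j) ` {..<m}"
    proof
      fix x :: 'a assume "x \<in> UNIV - {0}"
      then obtain j where j: "\<omega> ^ j = x" using pe unfolding primitive_element_def by auto
      have e: "j = m * (j div m) + j mod m" by simp
      have "\<omega> ^ j = (\<omega> ^ m) ^ (j div m) * \<omega> ^ (j mod m)"
        by (subst e) (simp only: power_add power_mult)
      then have "x = \<omega> ^ (j mod m)" using m1 j by simp
      then show "x \<in> (\<lambda>j. \<omega> ^ j) ` {..<m}" using mpos by auto
    qed
    then have "card (UNIV - {0::'a}) \<le> card ((\<lambda>j. \<omega> ^ j) ` {..<m})"
      by (rule card_mono[rotated]) simp
    also have "\<dots> \<le> m" using card_image_le[of "{..<m}" "\<lambda>j. \<omega> ^ j"] by simp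
    finally show False using mlt card_nonzero[where 'a='a] by simp
  qed
qed

lemma prim_pow_inj:
  fixes \<omega> :: "'a::{finite,field}"
  assumes pe: "primitive_element \<omega>" and "i < CARD('a) - 1" "j < CARD('a) - 1" "\<omega> ^ i = \<omega> ^ j"
  shows "i = j"
proof (rule ccontr)
  have nz: "\<omega> \<noteq> 0" using pe unfolding primitive_element_def by simp
  assume "i \<noteq> j"
  then consider "i < j" | "j < i" by linarith
  then show False
  proof cases
    case 1
    have "\<omega> ^ i * \<omega> ^ (j - i) = \<omega> ^ j" using 1 by (simp flip: power_add)
    then have "\<omega> ^ j * \<omega> ^ (j - i) = \<omega> ^ j * 1" using assms(4) by simp
    then have "\<omega> ^ (j - i) = 1" using nz by simp
    then have "(CARD('a) - 1) dvd (j - i)" using prim_pow_one[OF pe] by simp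
    then show False using 1 assms by (simp add: nat_dvd_not_less)
  next
    case 2
    have "\<omega> ^ j * \<omega> ^ (i - j) = \<omega> ^ i" using 2 by (simp flip: power_add)
    then have "\<omega> ^ i * \<omega> ^ (i - j) = \<omega> ^ i * 1" using assms(4) by simp
    then have "\<omega> ^ (i - j) = 1" using nz by simp
    then have "(CARD('a) - 1) dvd (i - j)" using prim_pow_one[OF pe] by simp
    then show False using 2 assms by (simp add: nat_dvd_not_less)
  qed
qed

lemma char_eq:
  fixes p :: nat
  assumes "prime p" "CARD('a::{finite,field}) = p ^ n"
  shows "CHAR('a) = p"
proof -
  have pos: "CHAR('a) > 0" by (rule finite_imp_CHAR_pos) simp
  have pr: "prime CHAR('a)" using prime_CHAR_semidom[OF pos] .
  have "CHAR('a) dvd p ^ n" using CHAR_dvd_CARD[where 'a='a] assms by simp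
  then have "CHAR('a) dvd p" using pr prime_dvd_power by blast
  then show ?thesis using pr assms(1) by (simp add: primes_dvd_imp_eq)
qed


locale ffsetup =
  fixes p a b :: nat and \<omega> :: "'f::{finite,field}"
  assumes p: "prime p" and apos: "a > 0" and b1: "b > 1"
    and card: "CARD('f) = p ^ (a * b)"
    and udvd: "b * (p ^ a - 1) dvd p ^ (a * b) - 1"
    and prim: "primitive_divisor (b * (p ^ a - 1)) p (a * b)"
    and pe: "primitive_element \<omega>"
begin

abbreviation "q \<equiv> p ^ a"
abbreviation "u \<equiv> b * (p ^ a - 1)"
abbreviation "k \<equiv> (p ^ (a * b) - 1) div (b * (p ^ a - 1))"
abbreviation "K \<equiv> (subfield_of_order (p ^ a) :: 'f set)"
abbreviation "G \<equiv> \<omega> ^ k"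

lemma p2: "p \<ge> 2" using p prime_ge_2_nat by blast

lemma q2: "q \<ge> 2"
proof -
  have "p ^ 1 \<le> p ^ a" using apos p2 by (intro power_increasing) auto
  then show ?thesis using p2 by simp
qed

lemma Qm1: "CARD('f) - 1 = u * k"
  using udvd card by simp

lemma kpos: "k > 0"
proof -
  have "CARD('f) - 1 > 0" using card_ge2[where 'a='f] by simp
  then show ?thesis using Qm1 by (cases k) auto
qed

lemma upos: "u > 0" using q2 b1 by simp

lemma char: "CHAR('f) = p" using char_eq[OF p card] .

lemma frob_add: "(x + y :: 'f) ^ (q ^ j) = x ^ (q ^ j) + y ^ (q ^ j)"
proof -
  have "q ^ j = CHAR('f) ^ (a * j)" by (simp add: char power_mult)
  then show ?thesis using p char by (intro freshmans_dream') auto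
qed

lemma frob_sum: "(\<Sum>i\<in>A. f i :: 'f) ^ (q ^ j) = (\<Sum>i\<in>A. f i ^ (q ^ j))"
proof -
  have "q ^ j = CHAR('f) ^ (a * j)" by (simp add: char power_mult)
  then show ?thesis using p char by (intro freshmans_dream_sum') auto
qed

lemma K_iff: "x \<in> K \<longleftrightarrow> x ^ q = x"
  by (simp add: subfield_of_order_def)

lemma K_0: "0 \<in> K" using p2 by (simp add: K_iff)

lemma K_minus: assumes "x \<in> K" "y \<in> K" shows "x - y \<in> K"
proof -
  have "x ^ q = ((x - y) + y) ^ q" by simp
  also have "\<dots> = (x - y) ^ q + y ^ q" using frob_add[of "x - y" y 1] by simp
  then have "(x - y) ^ q = x - y" using assms by (simp add: K_iff eq_diff_eq)
  then show ?thesis by (simp add: K_iff)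
qed

lemma K_pow: assumes "d \<in> K" shows "d ^ (q ^ j) = d"
proof (induction j)
  case (Suc j)
  have "q ^ Suc j = q ^ j * q" by (rule power_Suc2)
  then have "d ^ (q ^ Suc j) = (d ^ (q ^ j)) ^ q" by (simp only: power_mult)
  then show ?case using Suc assms by (simp add: K_iff)
qed simp

lemma pow_eq_imp_one:
  fixes x :: 'f
  assumes "x \<noteq> 0" "A < B" "x ^ A = x ^ B" shows "x ^ (B - A) = 1"
proof -
  have "x ^ A * x ^ (B - A) = x ^ B" using assms(2) by (simp flip: power_add)
  then have "x ^ A * x ^ (B - A) = x ^ A * 1" using assms(3) by simp
  then show ?thesis using assms(1) by simp
qed

lemma omega_nz: "\<omega> \<noteq> 0" using pe by (simp add: primitive_element_def)

lemma coprime_up: "coprime u p"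
proof -
  have "\<not> p dvd u"
  proof
    assume "p dvd u"
    then have "p dvd p ^ (a * b) - 1" using udvd dvd_trans by blast
    moreover have "p dvd p ^ (a * b)" using apos b1 by simp
    ultimately have "p dvd p ^ (a * b) - (p ^ (a * b) - 1)" by (rule dvd_diff_nat[rotated])
    moreover have "p ^ (a * b) - (p ^ (a * b) - 1) = 1" using p2 by simp
    ultimately show False using p by simp
  qed
  then have "coprime p u" by (rule prime_imp_coprime[OF p])
  then show ?thesis by (simp only: coprime_commute)
qed

lemma G_pow_inj_lt:
  assumes jl: "j < l" "l < b" and eq: "G ^ (q ^ j) = G ^ (q ^ l)"
  shows False
proof -
  have e1: "\<omega> ^ (k * q ^ j) = \<omega> ^ (k * q ^ l)" using eq by (simp only: power_mult)
  have "q ^ j < q ^ l" using jl q2 by (intro power_strict_increasing) auto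
  then have lt: "k * q ^ j < k * q ^ l" using kpos by simp
  have "\<omega> ^ (k * q ^ l - k * q ^ j) = 1" by (rule pow_eq_imp_one[OF omega_nz lt e1])
  then have d1: "(u * k) dvd (k * q ^ l - k * q ^ j)" using prim_pow_one[OF pe] Qm1 by simp
  have "k * q ^ l - k * q ^ j = k * (q ^ j * (q ^ (l - j) - 1))"
  proof -
    have jj: "j + (l - j) = l" using jl by simp
    have "q ^ j * q ^ (l - j) = q ^ (j + (l - j))" by (rule power_add[symmetric])
    then have ql: "q ^ l = q ^ j * q ^ (l - j)" unfolding jj by simp
    have "k * q ^ l - k * q ^ j = k * (q ^ l - q ^ j)" by (simp only: diff_mult_distrib2)
    also have "q ^ l - q ^ j = q ^ j * (q ^ (l - j) - 1)" unfolding ql by (simp only: diff_mult_distrib2 mult_1_right)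
    finally show ?thesis .
  qed
  with d1 have "k * u dvd k * (q ^ j * (q ^ (l - j) - 1))" by (simp only: mult.commute)
  then have "u dvd q ^ j * (q ^ (l - j) - 1)" using nat_mult_dvd_cancel1[OF kpos] by simp
  moreover have "coprime u (q ^ j)" using coprime_up by simp
  ultimately have "u dvd q ^ (l - j) - 1" using coprime_dvd_mult_right_iff by blast
  then have "u dvd p ^ (a * (l - j)) - 1" by (simp add: power_mult)
  moreover have "1 \<le> a * (l - j)" "a * (l - j) < a * b" using jl apos by auto
  ultimately show False using prim unfolding primitive_divisor_def by blast
qed

lemma G_pow_inj: "inj_on (\<lambda>j. G ^ (q ^ j)) {..<b}"
proof
  fix j l assume "j \<in> {..<b}" "l \<in> {..<b}" and eq: "G ^ (q ^ j) = G ^ (q ^ l)"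
  then show "j = l" using G_pow_inj_lt[of j l] G_pow_inj_lt[of l j]
    by (cases j l rule: linorder_cases) auto
qed

end


context ffsetup
begin

lemma indep0:
  assumes dK: "\<forall>i<b. d i \<in> K" and s0: "(\<Sum>i<b. d i * G ^ i) = 0"
  shows "\<forall>i<b. d i = 0"
proof (rule ccontr)
  assume "\<not> (\<forall>i<b. d i = 0)"
  then obtain i0 where i0: "i0 < b" "d i0 \<noteq> 0" by auto
  define P where "P = (\<Sum>i<b. monom (d i) i)"
  have coeffP: "coeff P n = (if n < b then d n else 0)" for n
    unfolding P_def by (simp add: coeff_sum coeff_monom)
  have Pnz: "P \<noteq> 0" using coeffP[of i0] i0 by auto
  have "degree P \<le> b - 1" by (rule degree_le) (auto simp: coeffP)
  then have degP: "degree P < b" using b1 by simp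
  have polyP: "poly P x = (\<Sum>i<b. d i * x ^ i)" for x
    unfolding P_def by (simp add: poly_sum poly_monom)
  have roots: "(\<lambda>j. G ^ (q ^ j)) ` {..<b} \<subseteq> {x. poly P x = 0}"
  proof clarify
    fix j assume j: "j < b"
    have "poly P (G ^ (q ^ j)) = (\<Sum>i<b. (d i * G ^ i) ^ (q ^ j))"
      unfolding polyP
    proof (rule sum.cong[OF refl])
      fix i assume i: "i \<in> {..<b}"
      have "(d i * G ^ i) ^ (q ^ j) = d i ^ (q ^ j) * (G ^ i) ^ (q ^ j)" by (rule power_mult_distrib)
      also have "d i ^ (q ^ j) = d i" using K_pow dK i by simp
      also have "(G ^ i) ^ (q ^ j) = (G ^ (q ^ j)) ^ i"
      proof -
        have "(G ^ i) ^ (q ^ j) = G ^ (i * q ^ j)" by (rule power_mult[symmetric])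
        also have "i * q ^ j = q ^ j * i" by (rule mult.commute)
        also have "G ^ (q ^ j * i) = (G ^ (q ^ j)) ^ i" by (rule power_mult)
        finally show ?thesis .
      qed
      finally show "d i * (G ^ (q ^ j)) ^ i = (d i * G ^ i) ^ (q ^ j)" by simp
    qed
    also have "\<dots> = (\<Sum>i<b. d i * G ^ i) ^ (q ^ j)" by (rule frob_sum[symmetric])
    also have "\<dots> = 0" unfolding s0 by (rule zero_power) (use p2 in simp)
    finally show "poly P (G ^ (q ^ j)) = 0" .
  qed
  have "b = card ((\<lambda>j. G ^ (q ^ j)) ` {..<b})" using G_pow_inj by (simp add: card_image)
  also have "\<dots> \<le> card {x. poly P x = 0}" by (rule card_mono[OF poly_roots_finite[OF Pnz] roots])
  also have "\<dots> \<le> degree P" by (rule card_poly_roots_bound[OF Pnz])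
  finally show False using degP by simp
qed

abbreviation "v \<equiv> (\<lambda>i. G ^ (i - 1))"

lemma indep1:
  assumes dK: "\<forall>i\<in>{1..b}. d i \<in> K" and s0: "(\<Sum>i=1..b. d i * v i) = 0"
  shows "\<forall>i\<in>{1..b}. d i = 0"
proof -
  have "(\<Sum>i=1..b. d i * v i) = (\<Sum>i<b. d (Suc i) * G ^ i)"
    by (simp add: sum.atLeast1_atMost_eq)
  then have s1: "(\<Sum>i<b. d (Suc i) * G ^ i) = 0" using s0 by simp
  have "\<forall>i<b. d (Suc i) \<in> K" using dK by auto
  then have "\<forall>i<b. d (Suc i) = 0" by (rule indep0[OF _ s1])
  show ?thesis
  proof
    fix i assume "i \<in> {1..b}"
    then have i: "i = Suc (i - 1)" "i - 1 < b" by auto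
    have "d (Suc (i - 1)) = 0" by (rule \<open>\<forall>i<b. d (Suc i) = 0\<close>[rule_format, OF i(2)])
    then show "d i = 0" using i(1) by simp
  qed
qed

lemma omega_shift: "\<omega> ^ (Y + (CARD('f) - 1) * m) = \<omega> ^ Y"
proof -
  have "\<omega> ^ (CARD('f) - 1) = 1" using prim_pow_one[OF pe] by simp
  then show ?thesis by (simp add: power_add power_mult)
qed

lemma card_K: "card K = q"
proof (rule antisym)
  define P :: "'f poly" where "P = monom 1 q + [:0, -1:]"
  have dP: "degree P = q"
    unfolding P_def using q2 by (subst degree_add_eq_left) (auto simp: degree_monom_eq)
  have Pnz: "P \<noteq> 0"
  proof
    assume "P = 0"
    then have "degree P = 0" by simp
    then show False using dP q2 by linarith
  qed
  have "K \<subseteq> {x. poly P x = 0}" by (auto simp: P_def poly_monom K_iff)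
  then have "card K \<le> card {x. poly P x = 0}" by (rule card_mono[OF poly_roots_finite[OF Pnz]])
  also have "\<dots> \<le> q" using card_poly_roots_bound[OF Pnz] dP by simp
  finally show "card K \<le> q" .
next
  define E where "E = (\<lambda>m. \<omega> ^ (k * b * m)) ` {..<q - 1}"
  have Qe: "CARD('f) - 1 = k * b * (q - 1)" using Qm1 by (simp add: mult.commute mult.left_commute)
  have EK: "E \<subseteq> K"
  proof
    fix x assume "x \<in> E"
    then obtain m where x: "x = \<omega> ^ (k * b * m)" by (auto simp: E_def)
    have "k * b * m * q = k * b * m + (CARD('f) - 1) * m"
    proof -
      have qs: "Suc (q - 1) = q" using q2 by simp
      have "k * b * m * q = k * b * m * Suc (q - 1)" by (simp only: qs)
      also have "\<dots> = k * b * m + k * b * m * (q - 1)" by (simp only: mult_Suc_right)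
      also have "k * b * m * (q - 1) = (CARD('f) - 1) * m" unfolding Qe by (simp only: mult_ac)
      finally show ?thesis .
    qed
    then have "x ^ q = x" unfolding x by (simp only: power_mult[symmetric] omega_shift)
    then show "x \<in> K" by (simp add: K_iff)
  qed
  have inj: "inj_on (\<lambda>m. \<omega> ^ (k * b * m)) {..<q - 1}"
  proof
    fix m m' assume m: "m \<in> {..<q - 1}" "m' \<in> {..<q - 1}" and eq: "\<omega> ^ (k * b * m) = \<omega> ^ (k * b * m')"
    have lt: "k * b * m < CARD('f) - 1" "k * b * m' < CARD('f) - 1"
      using m kpos b1 Qe by auto
    have "k * b * m = k * b * m'" by (rule prim_pow_inj[OF pe lt eq])
    then show "m = m'" using kpos b1 by simp
  qed
  have "0 \<notin> E" using omega_nz by (auto simp: E_def)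
  then have "card (insert 0 E) = Suc (q - 1)"
    using inj by (simp add: E_def card_image)
  also have "Suc (q - 1) = q" using q2 by simp
  finally have "card (insert 0 E) = q" .
  moreover have "insert 0 E \<subseteq> K" using EK K_0 by simp
  ultimately show "q \<le> card K" using card_mono[of K "insert 0 E"] by simp
qed

end


context ffsetup
begin

abbreviation "U \<equiv> (UNIV - {0::'f})"
abbreviation "DD \<equiv> (\<lambda>(t,i). t * v i) ` ((K-{0}) \<times> {1..b})"

lemma G_pow: "G ^ n = \<omega> ^ (k * n)" by (rule power_mult[symmetric])

lemma D_sub1: assumes "x \<noteq> 0" shows "x ^ k \<in> DD"
proof -
  obtain n where n: "\<omega> ^ n = x" using pe assms unfolding primitive_element_def by blast
  define m where "m = n div b"
  define i where "i = n mod b"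
  have ilt: "i < b" using b1 by (simp add: i_def)
  have "n = b * m + i" by (simp add: m_def i_def)
  then have "n * k = k * b * m + k * i" by (simp add: algebra_simps)
  then have "x ^ k = \<omega> ^ (k * b * m) * G ^ i"
    unfolding n[symmetric] G_pow by (simp only: power_mult[symmetric] power_add)
  moreover have "\<omega> ^ (k * b * m) \<in> K - {0}"
  proof -
    have Qe: "CARD('f) - 1 = k * b * (q - 1)" using Qm1 by (simp add: mult_ac)
    have qs: "Suc (q - 1) = q" using q2 by simp
      have "k * b * m * q = k * b * m * Suc (q - 1)" by (simp only: qs)
    also have "\<dots> = k * b * m + k * b * m * (q - 1)" by (simp only: mult_Suc_right)
    also have "k * b * m * (q - 1) = (CARD('f) - 1) * m" unfolding Qe by (simp only: mult_ac)
    finally have "(\<omega> ^ (k * b * m)) ^ q = \<omega> ^ (k * b * m)"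
      by (simp only: power_mult[symmetric] omega_shift)
    then show ?thesis using omega_nz by (simp add: K_iff)
  qed
  moreover have "Suc i \<in> {1..b}" "v (Suc i) = G ^ i" using ilt by auto
  ultimately show ?thesis by (auto intro!: image_eqI[of _ _ "(\<omega> ^ (k * b * m), Suc i)"])
qed

lemma D_sub2: assumes t: "t \<in> K" "t \<noteq> 0" and i: "i \<in> {1..b}"
  shows "t * v i \<in> (\<lambda>x. x ^ k) ` U"
proof -
  obtain n where n: "\<omega> ^ n = t" using pe t unfolding primitive_element_def by blast
  have tq: "t ^ q = t" using t by (simp add: K_iff)
  have "t * t ^ (q - 1) = t * 1"
  proof -
    have "t * t ^ (q - 1) = t ^ Suc (q - 1)" by simp
    also have "Suc (q - 1) = q" using q2 by simp
    finally show ?thesis using tq by simp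
  qed
  then have "t ^ (q - 1) = 1" using t by simp
  then have "\<omega> ^ (n * (q - 1)) = 1" unfolding n[symmetric] by (simp only: power_mult)
  then have "(CARD('f) - 1) dvd n * (q - 1)" using prim_pow_one[OF pe] by simp
  then have "(k * b) * (q - 1) dvd n * (q - 1)" using Qm1 by (simp add: mult_ac)
  then have "k * b dvd n" using q2 by simp
  then obtain m where m: "n = k * b * m" by (auto elim!: dvdE)
  have "t * v i = \<omega> ^ (k * (b * m)) * \<omega> ^ (k * (i - 1))"
    unfolding n[symmetric] m G_pow by (simp only: mult.assoc)
  also have "\<dots> = \<omega> ^ (k * (b * m) + k * (i - 1))" by (rule power_add[symmetric])
  also have "k * (b * m) + k * (i - 1) = k * (b * m + (i - 1))" by (rule add_mult_distrib2[symmetric])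
  also have "k * (b * m + (i - 1)) = (b * m + (i - 1)) * k" by (rule mult.commute)
  also have "\<omega> ^ ((b * m + (i - 1)) * k) = (\<omega> ^ (b * m + (i - 1))) ^ k" by (rule power_mult)
  finally show ?thesis using omega_nz by auto
qed

lemma D_eq: "(\<lambda>x. x ^ k) ` U = DD"
proof
  show "(\<lambda>x. x ^ k) ` U \<subseteq> DD" using D_sub1 by auto
  show "DD \<subseteq> (\<lambda>x. x ^ k) ` U"
  proof
    fix y assume "y \<in> DD"
    then obtain z where z: "z \<in> (K-{0}) \<times> {1..b}" and y: "y = (\<lambda>(t,i). t * v i) z" by (rule imageE)
    obtain t i where zti: "z = (t, i)" by (cases z)
    have ti: "t \<in> K" "t \<noteq> 0" "i \<in> {1..b}" "y = t * v i" using z y unfolding zti by simp_all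
    show "y \<in> (\<lambda>x. x ^ k) ` U" unfolding ti(4) by (rule D_sub2[OF ti(1-3)])
  qed
qed

lemma card_R: "card {z::'f. z ^ k = 1} = k"
proof (rule antisym)
  define P :: "'f poly" where "P = monom 1 k + [:-1:]"
  have dP: "degree P = k"
    unfolding P_def using kpos by (subst degree_add_eq_left) (auto simp: degree_monom_eq)
  have Pnz: "P \<noteq> 0"
  proof
    assume "P = 0"
    then have "degree P = 0" by simp
    then show False using dP kpos by linarith
  qed
  have "{z::'f. z ^ k = 1} \<subseteq> {x. poly P x = 0}" by (auto simp: P_def poly_monom)
  then have "card {z::'f. z ^ k = 1} \<le> card {x. poly P x = 0}" by (rule card_mono[OF poly_roots_finite[OF Pnz]])
  also have "\<dots> \<le> k" using card_poly_roots_bound[OF Pnz] dP by simp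
  finally show "card {z::'f. z ^ k = 1} \<le> k" .
next
  have sub: "(\<lambda>j. \<omega> ^ (u * j)) ` {..<k} \<subseteq> {z. z ^ k = 1}"
  proof clarify
    fix j
    have "(\<omega> ^ (u * j)) ^ k = \<omega> ^ (0 + (CARD('f) - 1) * j)" unfolding Qm1
      by (simp only: power_mult[symmetric] mult_ac add_0)
    then show "(\<omega> ^ (u * j)) ^ k = 1" by (simp only: omega_shift power_0)
  qed
  have inj: "inj_on (\<lambda>j. \<omega> ^ (u * j)) {..<k}"
  proof
    fix j j' assume j: "j \<in> {..<k}" "j' \<in> {..<k}" and eq: "\<omega> ^ (u * j) = \<omega> ^ (u * j')"
    have lt: "u * j < CARD('f) - 1" "u * j' < CARD('f) - 1"
      using j upos Qm1 by auto
    have "u * j = u * j'" by (rule prim_pow_inj[OF pe lt eq])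
    then show "j = j'" using upos by simp
  qed
  have "k = card ((\<lambda>j. \<omega> ^ (u * j)) ` {..<k})" using inj by (simp add: card_image)
  also have "\<dots> \<le> card {z::'f. z ^ k = 1}" by (rule card_mono[OF _ sub]) simp
  finally show "k \<le> card {z::'f. z ^ k = 1}" .
qed

lemma fiber: assumes x0: "x0 \<noteq> 0" shows "card {x. x \<in> U \<and> x ^ k = x0 ^ k} = k"
proof -
  have eq: "{x. x \<in> U \<and> x ^ k = x0 ^ k} = (\<lambda>z. x0 * z) ` {z. z ^ k = 1}"
  proof (intro equalityI subsetI)
    fix x assume x: "x \<in> {x. x \<in> U \<and> x ^ k = x0 ^ k}"
    have "(x / x0) ^ k = 1" using x x0 by (simp add: power_divide)
    moreover have "x = x0 * (x / x0)" using x0 by simp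
    ultimately show "x \<in> (\<lambda>z. x0 * z) ` {z. z ^ k = 1}" by blast
  next
    fix x assume "x \<in> (\<lambda>z. x0 * z) ` {z. z ^ k = 1}"
    then obtain z where z: "z ^ k = 1" "x = x0 * z" by blast
    have "z \<noteq> 0" using z kpos by (auto simp: power_0_left)
    then show "x \<in> {x. x \<in> U \<and> x ^ k = x0 ^ k}" using z x0 by (simp add: power_mult_distrib)
  qed
  have "inj_on (\<lambda>z. x0 * z) {z. z ^ k = 1}" using x0 by (auto intro: inj_onI)
  then show ?thesis unfolding eq using card_R by (simp add: card_image)
qed

lemma S_eq: "card {xs. length xs = r \<and> set xs \<subseteq> U \<and> sum_list (map (\<lambda>x. x ^ k) xs) = s} = k ^ r * TD DD r s"
proof (induction r arbitrary: s)
  case 0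
  then show ?case using lists_zero_card[of U "\<lambda>x. x ^ k" s] TD_0[of DD s] by simp
next
  case (Suc r)
  have finD: "finite DD" by simp
  have "card {xs. length xs = Suc r \<and> set xs \<subseteq> U \<and> sum_list (map (\<lambda>x. x ^ k) xs) = s}
     = (\<Sum>x\<in>U. k ^ r * TD DD r (s - x ^ k))"
    using lists_rec_card[where f="\<lambda>x. x ^ k" and A=U and n=r and s=s] Suc.IH by simp
  also have "\<dots> = (\<Sum>y\<in>(\<lambda>x. x ^ k) ` U. \<Sum>x\<in>{x. x \<in> U \<and> x ^ k = y}. k ^ r * TD DD r (s - x ^ k))"
    by (rule sum.image_gen) simp
  also have "\<dots> = (\<Sum>y\<in>(\<lambda>x. x ^ k) ` U. k * (k ^ r * TD DD r (s - y)))"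
  proof (rule sum.cong[OF refl])
    fix y assume "y \<in> (\<lambda>x. x ^ k) ` U"
    then obtain x0 where x0: "x0 \<noteq> 0" "y = x0 ^ k" by auto
    have "(\<Sum>x\<in>{x. x \<in> U \<and> x ^ k = y}. k ^ r * TD DD r (s - x ^ k)) =
          (\<Sum>x\<in>{x. x \<in> U \<and> x ^ k = y}. k ^ r * TD DD r (s - y))" by (rule sum.cong) auto
    also have "\<dots> = k * (k ^ r * TD DD r (s - y))" using fiber[OF x0(1)] x0(2) by simp
    finally show "(\<Sum>x\<in>{x. x \<in> U \<and> x ^ k = y}. k ^ r * TD DD r (s - x ^ k)) = k * (k ^ r * TD DD r (s - y))" .
  qed
  also have "\<dots> = (\<Sum>y\<in>DD. k * (k ^ r * TD DD r (s - y)))" by (simp only: D_eq)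
  also have "\<dots> = k ^ Suc r * TD DD (Suc r) s"
    using TD_Suc[OF finD, of r s] by (simp add: sum_distrib_left mult_ac)
  finally show ?case .
qed

end


theorem proposition4p3:
  fixes p a b r :: nat and \<omega> \<alpha> :: "'f::{finite,field}" and c :: "nat \<Rightarrow> 'f"
  assumes "prime p" and "a > 0" and "b > 1"
    and "CARD('f) = p ^ (a * b)"
    and "b * (p ^ a - 1) dvd p ^ (a * b) - 1"
    and "primitive_divisor (b * (p ^ a - 1)) p (a * b)"
    and "primitive_element \<omega>"
    and "r \<ge> 1"
    and "\<forall>i<b. c i \<in> subfield_of_order (p ^ a)"
    and "\<alpha> = (\<Sum>i<b. c i * \<omega> ^ (i * ((p ^ (a * b) - 1) div (b * (p ^ a - 1)))))"
  shows "real (num_solutions r ((p ^ (a * b) - 1) div (b * (p ^ a - 1))) \<alpha>) =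
    real ((p ^ (a * b) - 1) div (b * (p ^ a - 1))) ^ r *
    (\<Sum>rs\<in>compositions b r. real (fact r) / (\<Prod>i=1..b. real (fact (rs i))) *
       (\<Prod>i=1..b. a_factor (p ^ a) (rs i) (c (i - 1) = 0)))"
proof -
  interpret ffsetup p a b \<omega>
    by unfold_locales (use assms in auto)
  have cK: "c i \<in> K" if "i < b" for i using assms(9) that by blast
  have eK: "\<forall>i\<in>{1..b}. c (i - 1) \<in> K"
  proof
    fix i assume "i \<in> {1..b}" then have "i - 1 < b" by auto
    then show "c (i - 1) \<in> K" by (rule cK)
  qed
  have alpha: "\<alpha> = (\<Sum>i=1..b. c (i - 1) * v i)"
  proof -
    have "(\<Sum>i=1..b. c (i - 1) * v i) = (\<Sum>i<b. c i * G ^ i)"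
      by (simp add: sum.atLeast1_atMost_eq)
    also have "\<dots> = (\<Sum>i<b. c i * \<omega> ^ (i * k))"
    proof (rule sum.cong[OF refl])
      fix i
      have "G ^ i = \<omega> ^ (k * i)" by (rule power_mult[symmetric])
      also have "k * i = i * k" by (rule mult.commute)
      finally show "c i * G ^ i = c i * \<omega> ^ (i * k)" by simp
    qed
    finally show ?thesis using assms(10) by simp
  qed
  have ns: "num_solutions r k \<alpha> = card {xs. length xs = r \<and> set xs \<subseteq> U \<and> sum_list (map (\<lambda>x. x ^ k) xs) = \<alpha>}"
    unfolding num_solutions_def by (rule arg_cong[where f=card]) auto
  have finK: "finite K" by simp
  have dc: "real (TD DD r (\<Sum>i=1..b. c (i - 1) * v i)) =
     (\<Sum>rs\<in>compositions b r. mult_coeff b r rs * (\<Prod>i=1..b. real (NK K (rs i) (c (i - 1)))))"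
    by (rule D_count[OF finK K_0 K_minus indep1 refl eK]) auto
  have nk: "real (NK K n (c (i - 1))) = a_factor q n (c (i - 1) = 0)" if "i \<in> {1..b}" for n i
  proof -
    have "card K \<ge> 2" using card_K q2 by simp
    then have "real (NK K n (c (i - 1))) = a_factor (card K) n (c (i - 1) = 0)"
      using NK_formula[OF finK K_0 K_minus] eK that by blast
    then show ?thesis using card_K by simp
  qed
  have "real (num_solutions r k \<alpha>) = real k ^ r * real (TD DD r \<alpha>)"
    unfolding ns S_eq by simp
  also have "real (TD DD r \<alpha>) = (\<Sum>rs\<in>compositions b r. mult_coeff b r rs * (\<Prod>i=1..b. a_factor q (rs i) (c (i - 1) = 0)))"
    unfolding alpha dc
  proof (rule sum.cong[OF refl])
    fix rs
    have "(\<Prod>i=1..b. real (NK K (rs i) (c (i - 1)))) = (\<Prod>i=1..b. a_factor q (rs i) (c (i - 1) = 0))"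
    proof (rule prod.cong[OF refl])
      fix i assume "i \<in> {1..b}" then show "real (NK K (rs i) (c (i - 1))) = a_factor q (rs i) (c (i - 1) = 0)"
        by (rule nk)
    qed
    then show "mult_coeff b r rs * (\<Prod>i=1..b. real (NK K (rs i) (c (i - 1)))) =
        mult_coeff b r rs * (\<Prod>i=1..b. a_factor q (rs i) (c (i - 1) = 0))" by simp
  qed
  finally show ?thesis unfolding mult_coeff_def .
qed

end
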